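(* Let $\mathbb{M}$ be a flow monoid with idempotent addition, and let $h_1,h_2$ be flow graphs with the same node set $X$ whose edge functions are all continuous and distributive. Then $\mathsf{tf}(h_1)=\mathsf{tf}(h_2)$ if and only if full path replacement of $h_1$ by $h_2$ and full path replacement of $h_2$ by $h_1$ both hold.
   Context: A flow monoid is a commutative monoid $(\mathbb{M},+,0)$ such that $n\le m :\iff \exists o.\ m=n+o$ is a partial order in which every ascending chain $K$ has a least upper bound $\bigsqcup K$, and $n+\bigsqcup K=\bigsqcup(n+K)$. Addition is idempotent if $m+m=m$ for all $m$. A function is continuous if it commutes with least upper bounds of ascending chains, and distributive if $f(m+n)=f(m)+f(n)$ and $f(0)=0$. Infinite sums denote least upper bounds of finite partial sums; sums and $\le$ on functions are pointwise. A flow graph is $h=(X,E,\mathit{in})$ with $X\subseteq\mathbb{N}$ finite, $E:X\times\mathbb{N}\to$ continuous functions $\mathbb{M}\to\mathbb{M}$, $\mathit{in}:(\mathbb{N}\setminus X)\times X\to\mathbb{M}$; $\mathit{in}_x=\sum_{y\notin X}\mathit{in}(y,x)$; the flow is the least $\mathit{flow}:X\to\mathbb{M}$ with $\mathit{flow}(x)=\mathit{in}_x+\sum_{y\in X}E(y,x)(\mathit{flow}(y))$; outflow $\mathit{out}(x,y)=E(x,y)(\mathit{flow}(x))$ for $x\in X$, $y\notin X$. The transfer function $\mathsf{tf}(h)$ maps each inflow $\mathit{in}'$ to the outflow of $(X,E,\mathit{in}')$; $\mathsf{tf}(h_1)=\mathsf{tf}(h_2)$ means equality for all inflows. A path through $h$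 is $p=x_0\cdots x_nz$ with $x_i\in X$, $z\in\mathbb{N}\setminus X$; $\mathrm{Paths}_h(x\to(y,z))$ is the set of such paths with $x_0=x$, $x_n=y$, final element $z$; $E_p=E(x_n,z)\circ E(x_{n-1},x_n)\circ\cdots\circ E(x_0,x_1)$; for a set of paths $P$, $E_P=\sum_{q\in P}E_q$. Full path replacement of $h_1$ by $h_2$: for every $x\in X$, $y\in X$, $z\in\mathbb{N}\setminus X$ and every $p\in\mathrm{Paths}_{h_1}(x\to(y,z))$ there is $P\subseteq\mathrm{Paths}_{h_2}(x\to(y,z))$ with $E_p\le E_P$. *)

theory Defs
  imports Main
begin

definition fm_le :: "'m::comm_monoid_add \<Rightarrow> 'm \<Rightarrow> bool" where
  "fm_le n m \<longleftrightarrow> (\<exists>d. m = n + d)"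

definition fm_is_lub :: "'m::comm_monoid_add set \<Rightarrow> 'm \<Rightarrow> bool" where
  "fm_is_lub K l \<longleftrightarrow> (\<forall>k\<in>K. fm_le k l) \<and> (\<forall>u. (\<forall>k\<in>K. fm_le k u) \<longrightarrow> fm_le l u)"

definition fm_lub :: "'m::comm_monoid_add set \<Rightarrow> 'm" where
  "fm_lub K = (THE l. fm_is_lub K l)"

definition fm_ascending :: "(nat \<Rightarrow> 'm::comm_monoid_add) \<Rightarrow> bool" where
  "fm_ascending k \<longleftrightarrow> (\<forall>i. fm_le (k i) (k (Suc i)))"

definition flow_monoid :: "'m::comm_monoid_add itself \<Rightarrow> bool" where
  "flow_monoid _ \<longleftrightarrow>
     (\<forall>a::'m. fm_le a a) \<and>
     (\<forall>a b c::'m. fm_le a b \<longrightarrow> fm_le b c \<longrightarrow> fm_le a c) \<and>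
     (\<forall>a b::'m. fm_le a b \<longrightarrow> fm_le b a \<longrightarrow> a = b) \<and>
     (\<forall>k::nat \<Rightarrow> 'm. fm_ascending k \<longrightarrow>
        (\<exists>l. fm_is_lub (range k) l) \<and>
        (\<forall>n. fm_is_lub (range (\<lambda>i. n + k i)) (n + fm_lub (range k))))"

definition idempotent_add :: "'m::comm_monoid_add itself \<Rightarrow> bool" where
  "idempotent_add _ \<longleftrightarrow> (\<forall>m::'m. m + m = m)"

definition fm_continuous :: "('m::comm_monoid_add \<Rightarrow> 'm) \<Rightarrow> bool" where
  "fm_continuous f \<longleftrightarrow>
     (\<forall>k. fm_ascending k \<longrightarrow> fm_is_lub (range (\<lambda>i. f (k i))) (f (fm_lub (range k))))"

definition fm_distributive :: "('m::comm_monoid_add \<Rightarrow> 'm) \<Rightarrow> bool" where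
  "fm_distributive f \<longleftrightarrow> (\<forall>m n. f (m + n) = f m + f n) \<and> f 0 = 0"

definition fm_sum :: "('a \<Rightarrow> 'm::comm_monoid_add) \<Rightarrow> 'a set \<Rightarrow> 'm" where
  "fm_sum f A = fm_lub {sum f F | F. finite F \<and> F \<subseteq> A}"

text \<open>A flow graph is given by X (finite set of nat), E :: nat => nat => ('m => 'm),
  and inflow ifl :: nat => nat => 'm, where only ifl y x with y \<notin> X, x \<in> X matters.\<close>

definition flow_graph :: "nat set \<Rightarrow> (nat \<Rightarrow> nat \<Rightarrow> 'm::comm_monoid_add \<Rightarrow> 'm) \<Rightarrow> bool" where
  "flow_graph X E \<longleftrightarrow> finite X \<and> (\<forall>x\<in>X. \<forall>y. fm_continuous (E x y))"

definition inflow_at :: "nat set \<Rightarrow> (nat \<Rightarrow> nat \<Rightarrow> 'm::comm_monoid_add) \<Rightarrow> nat \<Rightarrow> 'm" where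
  "inflow_at X ifl x = fm_sum (\<lambda>y. ifl y x) (- X)"

definition flow_eq :: "nat set \<Rightarrow> (nat \<Rightarrow> nat \<Rightarrow> 'm::comm_monoid_add \<Rightarrow> 'm)
    \<Rightarrow> (nat \<Rightarrow> nat \<Rightarrow> 'm) \<Rightarrow> (nat \<Rightarrow> 'm) \<Rightarrow> bool" where
  "flow_eq X E ifl fl \<longleftrightarrow>
     (\<forall>x\<in>X. fl x = inflow_at X ifl x + (\<Sum>y\<in>X. E y x (fl y)))"

definition is_flow :: "nat set \<Rightarrow> (nat \<Rightarrow> nat \<Rightarrow> 'm::comm_monoid_add \<Rightarrow> 'm)
    \<Rightarrow> (nat \<Rightarrow> nat \<Rightarrow> 'm) \<Rightarrow> (nat \<Rightarrow> 'm) \<Rightarrow> bool" where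
  "is_flow X E ifl fl \<longleftrightarrow> flow_eq X E ifl fl \<and> (\<forall>x. x \<notin> X \<longrightarrow> fl x = 0) \<and>
     (\<forall>g. flow_eq X E ifl g \<longrightarrow> (\<forall>x\<in>X. fm_le (fl x) (g x)))"

definition flow :: "nat set \<Rightarrow> (nat \<Rightarrow> nat \<Rightarrow> 'm::comm_monoid_add \<Rightarrow> 'm)
    \<Rightarrow> (nat \<Rightarrow> nat \<Rightarrow> 'm) \<Rightarrow> nat \<Rightarrow> 'm" where
  "flow X E ifl = (THE fl. is_flow X E ifl fl)"

definition outflow :: "nat set \<Rightarrow> (nat \<Rightarrow> nat \<Rightarrow> 'm::comm_monoid_add \<Rightarrow> 'm)
    \<Rightarrow> (nat \<Rightarrow> nat \<Rightarrow> 'm) \<Rightarrow> nat \<Rightarrow> nat \<Rightarrow> 'm" where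
  "outflow X E ifl x y = (if x \<in> X \<and> y \<notin> X then E x y (flow X E ifl x) else 0)"

definition tf :: "nat set \<Rightarrow> (nat \<Rightarrow> nat \<Rightarrow> 'm::comm_monoid_add \<Rightarrow> 'm)
    \<Rightarrow> (nat \<Rightarrow> nat \<Rightarrow> 'm) \<Rightarrow> nat \<Rightarrow> nat \<Rightarrow> 'm" where
  "tf X E = (\<lambda>ifl. outflow X E ifl)"

text \<open>A path x0 ... xn z is represented by the nonempty node list [x0,...,xn]
  together with its final element z.\<close>
definition paths :: "nat set \<Rightarrow> nat \<Rightarrow> nat \<Rightarrow> nat list set" where
  "paths X x y = {xs. xs \<noteq> [] \<and> set xs \<subseteq> X \<and> hd xs = x \<and> last xs = y}"

fun path_fun :: "(nat \<Rightarrow> nat \<Rightarrow> 'm \<Rightarrow> 'm) \<Rightarrow> nat list \<Rightarrow> nat \<Rightarrow> 'm \<Rightarrow> 'm" where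
  "path_fun E [] z = id"
| "path_fun E [x] z = E x z"
| "path_fun E (x # x' # xs) z = path_fun E (x' # xs) z \<circ> E x x'"

definition full_path_replacement :: "nat set \<Rightarrow> (nat \<Rightarrow> nat \<Rightarrow> 'm::comm_monoid_add \<Rightarrow> 'm)
    \<Rightarrow> (nat \<Rightarrow> nat \<Rightarrow> 'm \<Rightarrow> 'm) \<Rightarrow> bool" where
  "full_path_replacement X E1 E2 \<longleftrightarrow>
     (\<forall>x\<in>X. \<forall>y\<in>X. \<forall>z. z \<notin> X \<longrightarrow> (\<forall>p\<in>paths X x y.
        \<exists>P \<subseteq> paths X x y. \<forall>m. fm_le (path_fun E1 p z m) (fm_sum (\<lambda>q. path_fun E2 q z m) P)))"

end

theory Submission
  imports Defs "HOL-Library.Countable" "HOL-Library.Countable_Set"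
begin


lemma fm_refl: "fm_le (a::'m::comm_monoid_add) a"
  unfolding fm_le_def by (rule exI[of _ 0]) simp

lemma fm_trans: "fm_le (a::'m::comm_monoid_add) b \<Longrightarrow> fm_le b c \<Longrightarrow> fm_le a c"
  unfolding fm_le_def by (metis add.assoc)

lemma fm_zero: "fm_le 0 (a::'m::comm_monoid_add)"
  unfolding fm_le_def by auto

lemma fm_add_mono: "fm_le (a::'m::comm_monoid_add) b \<Longrightarrow> fm_le c d \<Longrightarrow> fm_le (a+c) (b+d)"
  unfolding fm_le_def
  apply (elim exE)
  subgoal for e f by (rule exI[of _ "e+f"]) (simp add: ac_simps)
  done

lemma fm_le_add: "fm_le (a::'m::comm_monoid_add) (a+b)"
  unfolding fm_le_def by auto

lemma fm_le_add2: "fm_le (b::'m::comm_monoid_add) (a+b)"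
  unfolding fm_le_def by (auto simp: add.commute)

lemma fm_idem_le:
  assumes I: "idempotent_add TYPE('m::comm_monoid_add)"
    and "fm_le (a::'m) c" "fm_le b c"
  shows "fm_le (a+b) c"
proof -
  obtain d e where "c = a + d" "c = b + e" using assms unfolding fm_le_def by blast
  have "c = c + c" using I unfolding idempotent_add_def by simp
  also have "\<dots> = (a+d) + (b+e)" by (rule arg_cong2[where f="(+)"]) fact+
  also have "\<dots> = (a+b) + (d+e)" by (simp add: ac_simps)
  finally show ?thesis unfolding fm_le_def by blast
qed

lemma fm_sum_le:
  assumes I: "idempotent_add TYPE('m::comm_monoid_add)"
  shows "(\<forall>i\<in>S. fm_le (f i) (c::'m)) \<Longrightarrow> fm_le (sum f S) c"
proof (induction S rule: infinite_finite_induct)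
  case (infinite A) then show ?case by (simp add: fm_zero)
next
  case empty then show ?case by (simp add: fm_zero)
next
  case (insert x F) then show ?case by (simp add: fm_idem_le[OF I])
qed

lemma fm_sum_mono_set:
  assumes "finite G" "F \<subseteq> G"
  shows "fm_le (sum f F) (sum (f::'a \<Rightarrow> 'm::comm_monoid_add) G)"
proof -
  have "sum f G = sum f F + sum f (G - F)"
    using assms by (metis add.commute sum.subset_diff)
  then show ?thesis unfolding fm_le_def by blast
qed

lemma fm_term_le_sum:
  "finite S \<Longrightarrow> i \<in> S \<Longrightarrow> fm_le (f i) (sum (f::'a \<Rightarrow> 'm::comm_monoid_add) S)"
  using fm_sum_mono_set[of S "{i}" f] by simp

lemma fm_sum_mono:
  "(\<forall>i\<in>S. fm_le (f i) (g i)) \<Longrightarrow> fm_le (sum f S) (sum (g::'a \<Rightarrow> 'm::comm_monoid_add) S)"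
proof (induction S rule: infinite_finite_induct)
  case (infinite A) then show ?case by (simp add: fm_refl)
next
  case empty then show ?case by (simp add: fm_refl)
next
  case (insert x F) then show ?case by (simp add: fm_add_mono)
qed

lemma fm_antisym:
  "flow_monoid TYPE('m::comm_monoid_add) \<Longrightarrow> fm_le a b \<Longrightarrow> fm_le b a \<Longrightarrow> a = (b::'m)"
  unfolding flow_monoid_def by blast

lemma fm_chain_lub_ex:
  "flow_monoid TYPE('m::comm_monoid_add) \<Longrightarrow> fm_ascending (k::nat \<Rightarrow> 'm) \<Longrightarrow> \<exists>l. fm_is_lub (range k) l"
  unfolding flow_monoid_def by blast

lemma fm_chain_add:
  "flow_monoid TYPE('m::comm_monoid_add) \<Longrightarrow> fm_ascending (k::nat \<Rightarrow> 'm) \<Longrightarrow>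
    fm_is_lub (range (\<lambda>i. n + k i)) (n + fm_lub (range k))"
  unfolding flow_monoid_def by blast

lemma fm_lub_unique:
  "flow_monoid TYPE('m::comm_monoid_add) \<Longrightarrow> fm_is_lub K l \<Longrightarrow> fm_is_lub K l' \<Longrightarrow> l = (l'::'m)"
  unfolding fm_is_lub_def by (meson fm_antisym)

lemma fm_lub_eq:
  "flow_monoid TYPE('m::comm_monoid_add) \<Longrightarrow> fm_is_lub K (l::'m) \<Longrightarrow> fm_lub K = l"
  unfolding fm_lub_def by (rule the_equality) (auto dest: fm_lub_unique)

lemma fm_chain_lub:
  "flow_monoid TYPE('m::comm_monoid_add) \<Longrightarrow> fm_ascending (k::nat \<Rightarrow> 'm) \<Longrightarrow> fm_is_lub (range k) (fm_lub (range k))"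
  using fm_chain_lub_ex fm_lub_eq by metis

lemma fm_asc_le:
  assumes "fm_ascending (k::nat \<Rightarrow> 'm::comm_monoid_add)" "i \<le> j"
  shows "fm_le (k i) (k j)"
  using assms(2)
proof (induction j)
  case 0 then show ?case by (simp add: fm_refl)
next
  case (Suc j)
  show ?case
  proof (cases "i \<le> j")
    case True
    then show ?thesis using Suc assms(1) unfolding fm_ascending_def by (meson fm_trans)
  next
    case False
    then have "i = Suc j" using Suc by simp
    then show ?thesis by (simp add: fm_refl)
  qed
qed

lemma fm_lub_upper: "fm_is_lub K l \<Longrightarrow> k \<in> K \<Longrightarrow> fm_le k l"
  unfolding fm_is_lub_def by blast

lemma fm_lub_least: "fm_is_lub K l \<Longrightarrow> (\<And>k. k \<in> K \<Longrightarrow> fm_le k u) \<Longrightarrow> fm_le l u"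
  unfolding fm_is_lub_def by blast

lemma fm_two_chains:
  assumes FM: "flow_monoid TYPE('m::comm_monoid_add)"
    and A: "fm_ascending (a::nat \<Rightarrow> 'm)" and B: "fm_ascending b"
  shows "fm_is_lub (range (\<lambda>n. a n + b n)) (fm_lub (range a) + fm_lub (range b))"
proof -
  let ?La = "fm_lub (range a)" and ?Lb = "fm_lub (range b)"
  have la: "fm_is_lub (range a) ?La" and lb: "fm_is_lub (range b) ?Lb"
    using fm_chain_lub[OF FM] A B by auto
  show ?thesis
    unfolding fm_is_lub_def
  proof (intro conjI allI impI ballI)
    fix k assume "k \<in> range (\<lambda>n. a n + b n)"
    then obtain n where "k = a n + b n" by auto
    then show "fm_le k (?La + ?Lb)"
      using fm_lub_upper[OF la] fm_lub_upper[OF lb] by (simp add: fm_add_mono)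
  next
    fix u assume U: "\<forall>k\<in>range (\<lambda>n. a n + b n). fm_le k u"
    have 1: "fm_le (a i + ?Lb) u" for i
    proof -
      have "fm_is_lub (range (\<lambda>j. a i + b j)) (a i + ?Lb)" using fm_chain_add[OF FM B] .
      moreover have "fm_le (a i + b j) u" for j
      proof -
        have "fm_le (a i + b j) (a (max i j) + b (max i j))"
          using fm_asc_le[OF A] fm_asc_le[OF B] by (simp add: fm_add_mono)
        then show ?thesis using U by (meson fm_trans rangeI)
      qed
      ultimately show ?thesis by (auto intro: fm_lub_least)
    qed
    have "fm_is_lub (range (\<lambda>i. ?Lb + a i)) (?Lb + ?La)" using fm_chain_add[OF FM A] .
    then have "fm_le (?Lb + ?La) u" using 1 by (auto intro: fm_lub_least simp: add.commute)
    then show "fm_le (?La + ?Lb) u" by (simp add: add.commute)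
  qed
qed

lemma fm_const_chain: "fm_ascending (\<lambda>n. c)" "fm_is_lub (range (\<lambda>n::nat. c)) (c::'m::comm_monoid_add)"
  unfolding fm_ascending_def fm_is_lub_def by (auto simp: fm_refl)

lemma fm_sum_chain:
  assumes FM: "flow_monoid TYPE('m::comm_monoid_add)"
  shows "finite S \<Longrightarrow> (\<forall>u\<in>S. fm_ascending (c u :: nat \<Rightarrow> 'm)) \<Longrightarrow>
    fm_ascending (\<lambda>n. \<Sum>u\<in>S. c u n) \<and> fm_is_lub (range (\<lambda>n. \<Sum>u\<in>S. c u n)) (\<Sum>u\<in>S. fm_lub (range (c u)))"
proof (induction S rule: finite_induct)
  case empty then show ?case using fm_const_chain[of 0] by simp
next
  case (insert x F)
  then have a: "fm_ascending (c x)" and b: "fm_ascending (\<lambda>n. \<Sum>u\<in>F. c u n)"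
    and lb: "fm_is_lub (range (\<lambda>n. \<Sum>u\<in>F. c u n)) (\<Sum>u\<in>F. fm_lub (range (c u)))" by auto
  have "fm_is_lub (range (\<lambda>n. c x n + (\<Sum>u\<in>F. c u n)))
      (fm_lub (range (c x)) + fm_lub (range (\<lambda>n. \<Sum>u\<in>F. c u n)))"
    using fm_two_chains[OF FM a b] .
  moreover have "fm_lub (range (\<lambda>n. \<Sum>u\<in>F. c u n)) = (\<Sum>u\<in>F. fm_lub (range (c u)))"
    using fm_lub_eq[OF FM lb] .
  moreover have "fm_ascending (\<lambda>n. c x n + (\<Sum>u\<in>F. c u n))"
    using a b unfolding fm_ascending_def by (simp add: fm_add_mono)
  ultimately show ?case using insert by simp
qed

lemma fm_shift_lub:
  assumes "fm_ascending a" "fm_is_lub (range (\<lambda>n. a (Suc n))) (l::'m::comm_monoid_add)"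
  shows "fm_is_lub (range a) l"
  unfolding fm_is_lub_def
proof (intro conjI allI impI ballI)
  fix k assume "k \<in> range a"
  then obtain n where k: "k = a n" by auto
  have "fm_le (a n) (a (Suc n))" using assms(1) unfolding fm_ascending_def by blast
  moreover have "fm_le (a (Suc n)) l" using assms(2) fm_lub_upper by blast
  ultimately show "fm_le k l" using k fm_trans by blast
next
  fix u assume "\<forall>k\<in>range a. fm_le k u"
  then show "fm_le l u" using assms(2) by (auto intro: fm_lub_least)
qed

lemma fm_dist_mono: "fm_distributive f \<Longrightarrow> fm_le a b \<Longrightarrow> fm_le (f a) (f (b::'m::comm_monoid_add))"
  unfolding fm_distributive_def fm_le_def by auto

lemma fm_dist_zero: "fm_distributive f \<Longrightarrow> f 0 = (0::'m::comm_monoid_add)"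
  unfolding fm_distributive_def by auto

lemma fm_dist_sum: "fm_distributive (f::'m::comm_monoid_add \<Rightarrow> 'm) \<Longrightarrow> f (sum g S) = (\<Sum>i\<in>S. f (g i))"
proof (induction S rule: infinite_finite_induct)
  case (infinite A) then show ?case by (simp add: fm_dist_zero)
next
  case empty then show ?case by (simp add: fm_dist_zero)
next
  case (insert x F) then show ?case unfolding fm_distributive_def by simp
qed

lemma fm_dist_comp: "fm_distributive f \<Longrightarrow> fm_distributive g \<Longrightarrow> fm_distributive (f \<circ> g)"
  unfolding fm_distributive_def by simp

lemma fm_dist_id: "fm_distributive id"
  unfolding fm_distributive_def by simp



fun pn :: "(nat \<Rightarrow> nat \<Rightarrow> 'm \<Rightarrow> 'm) \<Rightarrow> nat list \<Rightarrow> 'm \<Rightarrow> 'm" where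
  "pn E [] = id"
| "pn E [x] = id"
| "pn E (x # x' # xs) = pn E (x' # xs) \<circ> E x x'"

lemma path_fun_pn: "p \<noteq> [] \<Longrightarrow> path_fun E p z = E (last p) z \<circ> pn E p"
  by (induction p rule: induct_list012) (simp_all add: comp_assoc)

lemma pn_snoc: "p \<noteq> [] \<Longrightarrow> pn E (p @ [v]) = E (last p) v \<circ> pn E p"
  by (induction p rule: induct_list012) (simp_all add: comp_assoc)

lemma pn_dist: "set p \<subseteq> X \<Longrightarrow> \<forall>x\<in>X. \<forall>y. fm_distributive (E x y) \<Longrightarrow> fm_distributive (pn E p)"
  by (induction E p rule: pn.induct) (auto intro: fm_dist_comp fm_dist_id)

definition Fop :: "nat set \<Rightarrow> (nat \<Rightarrow> nat \<Rightarrow> 'm::comm_monoid_add \<Rightarrow> 'm)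
    \<Rightarrow> (nat \<Rightarrow> nat \<Rightarrow> 'm) \<Rightarrow> (nat \<Rightarrow> 'm) \<Rightarrow> nat \<Rightarrow> 'm" where
  "Fop X E ifl fl v = (if v \<in> X then inflow_at X ifl v + (\<Sum>u\<in>X. E u v (fl u)) else 0)"

definition itr :: "nat set \<Rightarrow> (nat \<Rightarrow> nat \<Rightarrow> 'm::comm_monoid_add \<Rightarrow> 'm)
    \<Rightarrow> (nat \<Rightarrow> nat \<Rightarrow> 'm) \<Rightarrow> nat \<Rightarrow> nat \<Rightarrow> 'm" where
  "itr X E ifl n = (Fop X E ifl ^^ n) (\<lambda>_. 0)"

lemma itr_0: "itr X E ifl 0 = (\<lambda>_. 0)" by (simp add: itr_def)
lemma itr_Suc: "itr X E ifl (Suc n) = Fop X E ifl (itr X E ifl n)" by (simp add: itr_def)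

lemma Fop_mono:
  assumes "\<forall>x\<in>X. \<forall>y. fm_distributive (E x y)" "\<forall>u\<in>X. fm_le (f u) (g u)"
  shows "fm_le (Fop X E ifl f v) (Fop X E ifl g v)"
proof (cases "v \<in> X")
  case True
  have "\<forall>u\<in>X. fm_le (E u v (f u)) (E u v (g u))"
    using assms fm_dist_mono by blast
  then have "fm_le (\<Sum>u\<in>X. E u v (f u)) (\<Sum>u\<in>X. E u v (g u))" by (rule fm_sum_mono)
  then show ?thesis using True unfolding Fop_def by (simp add: fm_add_mono fm_refl)
next
  case False
  then show ?thesis unfolding Fop_def by (simp add: fm_refl)
qed

lemma itr_asc:
  assumes "\<forall>x\<in>X. \<forall>y. fm_distributive (E x y)"
  shows "fm_ascending (\<lambda>n. itr X E ifl n v)"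
proof -
  have "\<forall>v. fm_le (itr X E ifl n v) (itr X E ifl (Suc n) v)" for n
  proof (induction n)
    case 0 then show ?case by (simp add: itr_0 fm_zero)
  next
    case (Suc n) then show ?case
      unfolding itr_Suc[of _ _ _ "Suc n"] using Fop_mono[OF assms] by (simp add: itr_Suc)
  qed
  then show ?thesis unfolding fm_ascending_def by blast
qed

lemma itr_out: "v \<notin> X \<Longrightarrow> itr X E ifl n v = 0"
  by (cases n) (auto simp: itr_0 itr_Suc Fop_def)

definition good :: "nat set \<Rightarrow> (nat \<Rightarrow> nat \<Rightarrow> 'm::comm_monoid_add \<Rightarrow> 'm) \<Rightarrow> bool" where
  "good X E \<longleftrightarrow> finite X \<and> (\<forall>x\<in>X. \<forall>y. fm_continuous (E x y) \<and> fm_distributive (E x y))"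

lemma good_dist: "good X E \<Longrightarrow> \<forall>x\<in>X. \<forall>y. fm_distributive (E x y)"
  unfolding good_def by blast

lemma kleene:
  assumes FM: "flow_monoid TYPE('m::comm_monoid_add)"
    and G: "good X (E :: nat \<Rightarrow> nat \<Rightarrow> 'm \<Rightarrow> 'm)"
  shows "is_flow X E ifl (\<lambda>v. fm_lub (range (\<lambda>n. itr X E ifl n v)))"
proof -
  define L where "L = (\<lambda>v. fm_lub (range (\<lambda>n. itr X E ifl n v)))"
  have D: "\<forall>x\<in>X. \<forall>y. fm_distributive (E x y)" using good_dist[OF G] .
  have fin: "finite X" using G good_def by blast
  have asc: "fm_ascending (\<lambda>n. itr X E ifl n v)" for v using itr_asc[OF D] .
  have lubL: "fm_is_lub (range (\<lambda>n. itr X E ifl n v)) (L v)" for v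
    unfolding L_def using fm_chain_lub[OF FM asc] .
  have fixp: "L v = inflow_at X ifl v + (\<Sum>u\<in>X. E u v (L u))" if v: "v \<in> X" for v
  proof -
    define c where "c = (\<lambda>u n. E u v (itr X E ifl n u))"
    have casc: "\<forall>u\<in>X. fm_ascending (c u)"
      using asc D fm_dist_mono unfolding c_def fm_ascending_def by metis
    have club: "fm_lub (range (c u)) = E u v (L u)" if "u \<in> X" for u
    proof -
      have "fm_continuous (E u v)" using G that good_def by blast
      then have "fm_is_lub (range (c u)) (E u v (L u))"
        unfolding c_def fm_continuous_def L_def using asc by blast
      then show ?thesis using fm_lub_eq[OF FM] by blast
    qed
    have s: "fm_ascending (\<lambda>n. \<Sum>u\<in>X. c u n)"
      "fm_is_lub (range (\<lambda>n. \<Sum>u\<in>X. c u n)) (\<Sum>u\<in>X. E u v (L u))"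
      using fm_sum_chain[OF FM fin casc] club by auto
    have "fm_is_lub (range (\<lambda>n. inflow_at X ifl v + (\<Sum>u\<in>X. c u n)))
        (fm_lub (range (\<lambda>n::nat. inflow_at X ifl v)) + fm_lub (range (\<lambda>n. \<Sum>u\<in>X. c u n)))"
      using fm_two_chains[OF FM fm_const_chain(1)[of "inflow_at X ifl v"] s(1)] .
    moreover have "fm_lub (range (\<lambda>n::nat. inflow_at X ifl v)) = inflow_at X ifl v"
      using fm_lub_eq[OF FM fm_const_chain(2)] .
    moreover have "fm_lub (range (\<lambda>n. \<Sum>u\<in>X. c u n)) = (\<Sum>u\<in>X. E u v (L u))"
      using fm_lub_eq[OF FM s(2)] .
    ultimately have h: "fm_is_lub (range (\<lambda>n. inflow_at X ifl v + (\<Sum>u\<in>X. c u n))) (inflow_at X ifl v + (\<Sum>u\<in>X. E u v (L u)))"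
      by simp
    have h4: "(\<lambda>n. inflow_at X ifl v + (\<Sum>u\<in>X. c u n)) = (\<lambda>n. itr X E ifl (Suc n) v)"
      using v by (auto simp: c_def itr_Suc Fop_def)
    have "fm_is_lub (range (\<lambda>n. itr X E ifl (Suc n) v)) (inflow_at X ifl v + (\<Sum>u\<in>X. E u v (L u)))"
      using h unfolding h4 .
    then have "fm_is_lub (range (\<lambda>n. itr X E ifl n v)) (inflow_at X ifl v + (\<Sum>u\<in>X. E u v (L u)))"
      by (rule fm_shift_lub[OF asc])
    then show ?thesis using fm_lub_unique[OF FM lubL] by simp
  qed
  have out: "L v = 0" if "v \<notin> X" for v
  proof -
    have "fm_is_lub (range (\<lambda>n. itr X E ifl n v)) 0"
      using itr_out[OF that, of E ifl] fm_const_chain(2)[of 0] by simp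
    then show ?thesis using fm_lub_unique[OF FM lubL] by simp
  qed
  have least: "fm_le (L v) (g v)" if g: "flow_eq X E ifl g" and v: "v \<in> X" for g v
  proof -
    have "\<forall>v\<in>X. fm_le (itr X E ifl n v) (g v)" for n
    proof (induction n)
      case 0 then show ?case by (simp add: itr_0 fm_zero)
    next
      case (Suc n)
      show ?case
      proof
        fix w assume w: "w \<in> X"
        have "fm_le (Fop X E ifl (itr X E ifl n) w) (Fop X E ifl g w)"
          using Fop_mono[OF D Suc] .
        also have "Fop X E ifl g w = g w" using g w unfolding flow_eq_def Fop_def by simp
        finally show "fm_le (itr X E ifl (Suc n) w) (g w)" by (simp add: itr_Suc)
      qed
    qed
    then have A: "\<forall>v\<in>X. fm_le (itr X E ifl n v) (g v)" for n by blast
    show ?thesis by (rule fm_lub_least[OF lubL[of v]]) (use A v in auto)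
  qed
  have fe: "flow_eq X E ifl L" unfolding flow_eq_def using fixp by blast
  show ?thesis
    unfolding is_flow_def L_def[symmetric] using fe out least by blast
qed

lemma flow_char:
  assumes FM: "flow_monoid TYPE('m::comm_monoid_add)"
    and G: "good X (E :: nat \<Rightarrow> nat \<Rightarrow> 'm \<Rightarrow> 'm)"
  shows "flow X E ifl = (\<lambda>v. fm_lub (range (\<lambda>n. itr X E ifl n v)))"
  unfolding flow_def
proof (rule the_equality)
  show "is_flow X E ifl (\<lambda>v. fm_lub (range (\<lambda>n. itr X E ifl n v)))" using kleene[OF FM G] .
next
  fix fl assume a: "is_flow X E ifl fl"
  have b: "is_flow X E ifl (\<lambda>v. fm_lub (range (\<lambda>n. itr X E ifl n v)))" using kleene[OF FM G] .
  show "fl = (\<lambda>v. fm_lub (range (\<lambda>n. itr X E ifl n v)))"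
  proof
    fix v show "fl v = fm_lub (range (\<lambda>n. itr X E ifl n v))"
    proof (cases "v \<in> X")
      case True
      have a1: "flow_eq X E ifl fl" "\<forall>g. flow_eq X E ifl g \<longrightarrow> (\<forall>x\<in>X. fm_le (fl x) (g x))"
        using a unfolding is_flow_def by auto
      have b1: "flow_eq X E ifl (\<lambda>v. fm_lub (range (\<lambda>n. itr X E ifl n v)))"
        "\<forall>g. flow_eq X E ifl g \<longrightarrow> (\<forall>x\<in>X. fm_le (fm_lub (range (\<lambda>n. itr X E ifl n x))) (g x))"
        using b unfolding is_flow_def by auto
      show ?thesis
        using fm_antisym[OF FM a1(2)[rule_format, OF b1(1) True] b1(2)[rule_format, OF a1(1) True]] by simp
    next
      case False
      then show ?thesis using a b unfolding is_flow_def by simp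
    qed
  qed
qed

lemma flow_props:
  assumes FM: "flow_monoid TYPE('m::comm_monoid_add)"
    and G: "good X (E :: nat \<Rightarrow> nat \<Rightarrow> 'm \<Rightarrow> 'm)"
  shows "flow_eq X E ifl (flow X E ifl)"
    "fm_is_lub (range (\<lambda>n. itr X E ifl n v)) (flow X E ifl v)"
proof -
  show "flow_eq X E ifl (flow X E ifl)"
    using kleene[OF FM G] flow_char[OF FM G] unfolding is_flow_def by simp
  show "fm_is_lub (range (\<lambda>n. itr X E ifl n v)) (flow X E ifl v)"
    using flow_char[OF FM G] fm_chain_lub[OF FM itr_asc[OF good_dist[OF G]]] by simp
qed



lemma fm_max_lub: "m \<in> S \<Longrightarrow> (\<forall>k\<in>S. fm_le k m) \<Longrightarrow> fm_is_lub S m"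
  unfolding fm_is_lub_def by blast

lemma fm_sum_lub:
  assumes FM: "flow_monoid TYPE('m::comm_monoid_add)" and C: "countable A"
  shows "fm_is_lub {sum f F |F. finite F \<and> F \<subseteq> A} (fm_sum (f :: 'a \<Rightarrow> 'm) A)"
proof -
  let ?S = "{sum f F |F. finite F \<and> F \<subseteq> A}"
  have "\<exists>l. fm_is_lub ?S l"
  proof (cases "A = {}")
    case True
    then have "?S = {0}" by auto
    then show ?thesis using fm_max_lub[of 0 "{0::'m}"] by (auto simp: fm_refl)
  next
    case False
    define s where "s = from_nat_into A"
    have rs: "range s = A" unfolding s_def using range_from_nat_into[OF False C] .
    define c where "c n = sum f (s ` {..<n})" for n
    have asc: "fm_ascending c"
      unfolding fm_ascending_def c_def
      by (intro allI fm_sum_mono_set) (auto simp: lessThan_Suc)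
    obtain l where l: "fm_is_lub (range c) l" using fm_chain_lub_ex[OF FM asc] by blast
    have cS: "c n \<in> ?S" for n unfolding c_def using rs by blast
    have "fm_is_lub ?S l"
      unfolding fm_is_lub_def
    proof (intro conjI allI impI ballI)
      fix k assume "k \<in> ?S"
      then obtain F where F: "k = sum f F" "finite F" "F \<subseteq> A" by blast
      then have "F \<subseteq> s ` UNIV" using rs by simp
      then obtain D where D: "finite D" "F = s ` D" using finite_subset_image[OF F(2)] by blast
      obtain N where "D \<subseteq> {..<N}" using finite_nat_bounded[OF D(1)] by blast
      then have "F \<subseteq> s ` {..<N}" using D by auto
      then have "fm_le k (c N)" unfolding c_def F(1) by (intro fm_sum_mono_set) auto
      moreover have "fm_le (c N) l" using l fm_lub_upper by blast
      ultimately show "fm_le k l" by (rule fm_trans)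
    next
      fix u assume "\<forall>k\<in>?S. fm_le k u"
      then show "fm_le l u" using cS by (intro fm_lub_least[OF l]) auto
    qed
    then show ?thesis by blast
  qed
  then obtain l where "fm_is_lub ?S l" by blast
  then show ?thesis unfolding fm_sum_def using fm_lub_eq[OF FM] by simp
qed

lemma inflow_le:
  assumes "flow_eq X E ifl fl" "x \<in> X"
  shows "fm_le (inflow_at X ifl x) (fl x)"
  using assms unfolding flow_eq_def by (simp add: fm_le_add)

lemma edge_le:
  assumes "flow_eq X E ifl fl" "x \<in> X" "y \<in> X" "finite X"
  shows "fm_le (E x y (fl x)) (fl y)"
proof -
  have 1: "fm_le (E x y (fl x)) (\<Sum>u\<in>X. E u y (fl u))" using fm_term_le_sum assms by fast
  have 2: "fm_le (\<Sum>u\<in>X. E u y (fl u)) (fl y)"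
    using assms unfolding flow_eq_def by (simp add: fm_le_add2)
  show ?thesis using fm_trans[OF 1 2] .
qed

lemma pn_le_flow:
  assumes D: "\<forall>x\<in>X. \<forall>y. fm_distributive (E x y)" and fin: "finite X"
    and fe: "flow_eq X E ifl fl"
  shows "p \<noteq> [] \<Longrightarrow> set p \<subseteq> X \<Longrightarrow> fm_le a (fl (hd p)) \<Longrightarrow> fm_le (pn E p a) (fl (last p))"
proof (induction p arbitrary: a rule: induct_list012)
  case 1 then show ?case by simp
next
  case (2 x) then show ?case by simp
next
  case (3 x y zs)
  have xy: "x \<in> X" "y \<in> X" using 3 by auto
  have "fm_le (E x y a) (E x y (fl x))" using D xy 3 fm_dist_mono by (metis list.sel(1))
  moreover have "fm_le (E x y (fl x)) (fl y)" using edge_le[OF fe xy fin] .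
  ultimately have "fm_le (E x y a) (fl (hd (y # zs)))" using fm_trans by fastforce
  then have "fm_le (pn E (y # zs) (E x y a)) (fl (last (y # zs)))"
    using 3 by auto
  then show ?case by simp
qed

lemma itr_bound:
  assumes I: "idempotent_add TYPE('m::comm_monoid_add)"
    and D: "\<forall>x\<in>X. \<forall>y. fm_distributive (E x y)" and fin: "finite X"
  shows "\<forall>x\<in>X. \<forall>p\<in>paths X x v. fm_le (\<phi> (pn E p (inflow_at X ifl x))) (u::'m) \<Longrightarrow>
    fm_distributive \<phi> \<Longrightarrow> v \<in> X \<Longrightarrow> fm_le (\<phi> (itr X (E :: nat \<Rightarrow> nat \<Rightarrow> 'm \<Rightarrow> 'm) ifl n v)) u"
proof (induction n arbitrary: \<phi> v)
  case 0 then show ?case by (simp add: itr_0 fm_dist_zero fm_zero)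
next
  case (Suc n)
  have eq: "\<phi> (itr X E ifl (Suc n) v) = \<phi> (inflow_at X ifl v) + (\<Sum>w\<in>X. \<phi> (E w v (itr X E ifl n w)))"
  proof -
    have "\<phi> (itr X E ifl (Suc n) v) = \<phi> (inflow_at X ifl v + (\<Sum>w\<in>X. E w v (itr X E ifl n w)))"
      using Suc.prems(3) unfolding itr_Suc Fop_def by simp
    also have "\<dots> = \<phi> (inflow_at X ifl v) + \<phi> (\<Sum>w\<in>X. E w v (itr X E ifl n w))"
      using Suc.prems(2) unfolding fm_distributive_def by blast
    also have "\<phi> (\<Sum>w\<in>X. E w v (itr X E ifl n w)) = (\<Sum>w\<in>X. \<phi> (E w v (itr X E ifl n w)))"
      by (rule fm_dist_sum[OF Suc.prems(2)])
    finally show ?thesis .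
  qed
  have a: "fm_le (\<phi> (inflow_at X ifl v)) u"
  proof -
    have "[v] \<in> paths X v v" using Suc.prems(3) unfolding paths_def by simp
    then show ?thesis using Suc.prems(1,3) by fastforce
  qed
  have b: "fm_le (\<phi> (E w v (itr X E ifl n w))) u" if w: "w \<in> X" for w
  proof -
    have dw: "fm_distributive (\<phi> \<circ> E w v)" using fm_dist_comp Suc.prems(2) D w by blast
    have "\<forall>x\<in>X. \<forall>p\<in>paths X x w. fm_le ((\<phi> \<circ> E w v) (pn E p (inflow_at X ifl x))) u"
    proof (intro ballI)
      fix x p assume x: "x \<in> X" and p: "p \<in> paths X x w"
      then have p': "p @ [v] \<in> paths X x v" "p \<noteq> []" "last p = w"
        using Suc.prems(3) unfolding paths_def by auto
      have "pn E (p @ [v]) = E w v \<circ> pn E p" using pn_snoc[OF p'(2)] p'(3) by simp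
      then show "fm_le ((\<phi> \<circ> E w v) (pn E p (inflow_at X ifl x))) u"
        using Suc.prems(1) x p'(1) by (metis comp_apply)
    qed
    from Suc.IH[OF this dw w] show ?thesis by simp
  qed
  show ?case unfolding eq
    by (intro fm_idem_le[OF I] a fm_sum_le[OF I] ballI b)
qed

lemma outflow_le:
  assumes FM: "flow_monoid TYPE('m::comm_monoid_add)" and I: "idempotent_add TYPE('m)"
    and G: "good X (E :: nat \<Rightarrow> nat \<Rightarrow> 'm \<Rightarrow> 'm)" and y: "y \<in> X"
    and H: "\<forall>x\<in>X. \<forall>p\<in>paths X x y. fm_le (path_fun E p z (inflow_at X ifl x)) u"
  shows "fm_le (E y z (flow X E ifl y)) u"
proof -
  have D: "\<forall>x\<in>X. \<forall>y. fm_distributive (E x y)" using good_dist[OF G] .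
  have fin: "finite X" using G good_def by blast
  have cont: "fm_continuous (E y z)" and dyz: "fm_distributive (E y z)" using G y good_def by blast+
  have asc: "fm_ascending (\<lambda>n. itr X E ifl n y)" using itr_asc[OF D] .
  have fl: "flow X E ifl y = fm_lub (range (\<lambda>n. itr X E ifl n y))" using flow_char[OF FM G] by simp
  have lub: "fm_is_lub (range (\<lambda>n. E y z (itr X E ifl n y))) (E y z (flow X E ifl y))"
    using cont asc unfolding fm_continuous_def fl by blast
  have H': "\<forall>x\<in>X. \<forall>p\<in>paths X x y. fm_le (E y z (pn E p (inflow_at X ifl x))) u"
  proof (intro ballI)
    fix x p assume xp: "x \<in> X" "p \<in> paths X x y"
    then have "p \<noteq> []" "last p = y" unfolding paths_def by auto
    then have "path_fun E p z = E y z \<circ> pn E p" using path_fun_pn[of p E z] by simp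
    then show "fm_le (E y z (pn E p (inflow_at X ifl x))) u"
      using H[rule_format, OF xp] by simp
  qed
  have "fm_le (E y z (itr X E ifl n y)) u" for n
    using itr_bound[OF I D fin H' dyz y] .
  then show ?thesis by (intro fm_lub_least[OF lub]) auto
qed

lemma fpr_le:
  assumes FM: "flow_monoid TYPE('m::comm_monoid_add)" and I: "idempotent_add TYPE('m)"
    and G1: "good X (E1 :: nat \<Rightarrow> nat \<Rightarrow> 'm \<Rightarrow> 'm)" and G2: "good X E2"
    and R: "full_path_replacement X E1 E2" and y: "y \<in> X" and z: "z \<notin> X"
  shows "fm_le (E1 y z (flow X E1 ifl y)) (E2 y z (flow X E2 ifl y))"
proof (rule outflow_le[OF FM I G1 y], intro ballI)
  fix x p assume x: "x \<in> X" and p: "p \<in> paths X x y"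
  let ?m = "inflow_at X ifl x"
  let ?u = "E2 y z (flow X E2 ifl y)"
  obtain P where P: "P \<subseteq> paths X x y" "fm_le (path_fun E1 p z ?m) (fm_sum (\<lambda>q. path_fun E2 q z ?m) P)"
  proof -
    have "\<exists>P\<subseteq>paths X x y. \<forall>m. fm_le (path_fun E1 p z m) (fm_sum (\<lambda>q. path_fun E2 q z m) P)"
      using R[unfolded full_path_replacement_def, rule_format, OF x y z p] .
    then show ?thesis using that by blast
  qed
  have D2: "\<forall>x\<in>X. \<forall>y. fm_distributive (E2 x y)" using good_dist[OF G2] .
  have fin: "finite X" using G2 good_def by blast
  have dyz: "fm_distributive (E2 y z)" using G2 y good_def by blast
  have fe: "flow_eq X E2 ifl (flow X E2 ifl)" using flow_props(1)[OF FM G2] .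
  have q_le: "fm_le (path_fun E2 q z ?m) ?u" if q: "q \<in> P" for q
  proof -
    have q': "q \<noteq> []" "set q \<subseteq> X" "hd q = x" "last q = y" using q P(1) unfolding paths_def by auto
    have "fm_le (pn E2 q ?m) (flow X E2 ifl (last q))"
      using pn_le_flow[OF D2 fin fe q'(1,2)] inflow_le[OF fe x] q'(3) by simp
    then have "fm_le (E2 y z (pn E2 q ?m)) ?u" using q'(4) fm_dist_mono[OF dyz, of "pn E2 q ?m" "flow X E2 ifl y"] by simp
    moreover have "path_fun E2 q z = E2 y z \<circ> pn E2 q" using path_fun_pn[OF q'(1), of E2 z] q'(4) by simp
    ultimately show ?thesis by simp
  qed
  have "fm_le (fm_sum (\<lambda>q. path_fun E2 q z ?m) P) ?u"
  proof (rule fm_lub_least[OF fm_sum_lub[OF FM]])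
    show "countable P" by (rule countableI_type)
  next
    fix k assume "k \<in> {sum (\<lambda>q. path_fun E2 q z ?m) F |F. finite F \<and> F \<subseteq> P}"
    then obtain F where "k = sum (\<lambda>q. path_fun E2 q z ?m) F" "F \<subseteq> P" by blast
    then have "\<forall>q\<in>F. fm_le (path_fun E2 q z ?m) ?u" using q_le by blast
    then show "fm_le k ?u" using fm_sum_le[OF I] \<open>k = _\<close> by simp
  qed
  then show "fm_le (path_fun E1 p z ?m) ?u" using P(2) fm_trans by blast
qed



lemma inflow_single:
  assumes FM: "flow_monoid TYPE('m::comm_monoid_add)" and w0: "w0 \<notin> X"
  shows "inflow_at X (\<lambda>w v. if w = w0 \<and> v = x then m else (0::'m)) v = (if v = x then m else 0)"
proof -
  let ?f = "\<lambda>w. if w = w0 \<and> v = x then m else (0::'m)"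
  let ?S = "{sum ?f F |F. finite F \<and> F \<subseteq> - X}"
  have "fm_is_lub ?S (if v = x then m else 0)"
  proof (rule fm_max_lub)
    show "(if v = x then m else 0) \<in> ?S"
    proof (cases "v = x")
      case True
      then have "sum ?f {w0} = m" by simp
      then show ?thesis using True w0 by (auto intro!: exI[of _ "{w0}"])
    next
      case False
      then have "sum ?f {} = 0" by simp
      then show ?thesis using False by (auto intro!: exI[of _ "{}"])
    qed
  next
    show "\<forall>k\<in>?S. fm_le k (if v = x then m else 0)"
    proof
      fix k assume "k \<in> ?S"
      then obtain F where F: "k = sum ?f F" "finite F" by blast
      have "sum ?f F = (if v = x then (if w0 \<in> F then m else 0) else 0)"
        using F(2) by (auto simp: sum.delta)
      then show "fm_le k (if v = x then m else 0)" using F(1) by (auto simp: fm_refl fm_zero)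
    qed
  qed
  then show ?thesis unfolding inflow_at_def fm_sum_def using fm_lub_eq[OF FM] by simp
qed

lemma tf_fpr:
  assumes FM: "flow_monoid TYPE('m::comm_monoid_add)" and I: "idempotent_add TYPE('m)"
    and G1: "good X (E1 :: nat \<Rightarrow> nat \<Rightarrow> 'm \<Rightarrow> 'm)" and G2: "good X E2"
    and T: "tf X E1 = tf X E2"
  shows "full_path_replacement X E1 E2"
  unfolding full_path_replacement_def
proof (intro ballI allI impI)
  fix x y z p assume x: "x \<in> X" and y: "y \<in> X" and z: "z \<notin> X" and p: "p \<in> paths X x y"
  have fin: "finite X" using G1 good_def by blast
  obtain w0 where w0: "w0 \<notin> X" using ex_new_if_finite[OF infinite_UNIV_nat fin] by blast
  show "\<exists>P\<subseteq>paths X x y. \<forall>m. fm_le (path_fun E1 p z m) (fm_sum (\<lambda>q. path_fun E2 q z m) P)"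
  proof (intro exI[of _ "paths X x y"] conjI allI subset_refl)
    fix m :: 'm
    define ifl where "ifl = (\<lambda>w v. if w = w0 \<and> v = x then m else (0::'m))"
    have inf: "inflow_at X ifl v = (if v = x then m else 0)" for v
      unfolding ifl_def using inflow_single[OF FM w0] .
    have D1: "\<forall>x\<in>X. \<forall>y. fm_distributive (E1 x y)" using good_dist[OF G1] .
    have D2: "\<forall>x\<in>X. \<forall>y. fm_distributive (E2 x y)" using good_dist[OF G2] .
    have p': "p \<noteq> []" "set p \<subseteq> X" "hd p = x" "last p = y" using p unfolding paths_def by auto
    have fe1: "flow_eq X E1 ifl (flow X E1 ifl)" using flow_props(1)[OF FM G1] .
    have "fm_le (inflow_at X ifl x) (flow X E1 ifl x)" using inflow_le[OF fe1 x] .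
    then have "fm_le m (flow X E1 ifl (hd p))" using inf p'(3) by simp
    then have "fm_le (pn E1 p m) (flow X E1 ifl y)"
      using pn_le_flow[OF D1 fin fe1 p'(1,2)] p'(4) by simp
    moreover have d1: "fm_distributive (E1 y z)" using D1 y by blast
    ultimately have "fm_le (E1 y z (pn E1 p m)) (E1 y z (flow X E1 ifl y))"
      using fm_dist_mono by blast
    moreover have "path_fun E1 p z = E1 y z \<circ> pn E1 p" using path_fun_pn[OF p'(1), of E1 z] p'(4) by simp
    ultimately have 1: "fm_le (path_fun E1 p z m) (E1 y z (flow X E1 ifl y))" by simp
    have "E1 y z (flow X E1 ifl y) = tf X E1 ifl y z" unfolding tf_def outflow_def using y z by simp
    also have "\<dots> = tf X E2 ifl y z" using T by simp
    also have "\<dots> = E2 y z (flow X E2 ifl y)" unfolding tf_def outflow_def using y z by simp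
    finally have 2: "E1 y z (flow X E1 ifl y) = E2 y z (flow X E2 ifl y)" .
    let ?u = "fm_sum (\<lambda>q. path_fun E2 q z m) (paths X x y)"
    have 3: "fm_le (E2 y z (flow X E2 ifl y)) ?u"
    proof (rule outflow_le[OF FM I G2 y], intro ballI)
      fix x' q assume x': "x' \<in> X" and q: "q \<in> paths X x' y"
      have q': "q \<noteq> []" "set q \<subseteq> X" using q unfolding paths_def by auto
      show "fm_le (path_fun E2 q z (inflow_at X ifl x')) ?u"
      proof (cases "x' = x")
        case True
        have "path_fun E2 q z m \<in> {sum (\<lambda>q. path_fun E2 q z m) F |F. finite F \<and> F \<subseteq> paths X x y}"
          using q True by (auto intro!: exI[of _ "{q}"])
        then have "fm_le (path_fun E2 q z m) ?u"
          using fm_lub_upper[OF fm_sum_lub[OF FM countableI_type]] by blast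
        then show ?thesis using inf True by simp
      next
        case False
        have "fm_distributive (pn E2 q)" using pn_dist[OF q'(2) D2] .
        moreover have "fm_distributive (E2 (last q) z)" using D2 q'(1,2) last_in_set by blast
        ultimately have "path_fun E2 q z 0 = 0"
          using path_fun_pn[OF q'(1), of E2 z] fm_dist_zero by (metis comp_apply)
        then show ?thesis using inf False by (simp add: fm_zero)
      qed
    qed
    show "fm_le (path_fun E1 p z m) ?u" using 1 2 3 fm_trans by metis
  qed
qed

theorem lemma7:
  fixes X :: "nat set"
    and E1 E2 :: "nat \<Rightarrow> nat \<Rightarrow> 'm::comm_monoid_add \<Rightarrow> 'm"
  assumes "flow_monoid TYPE('m)"
    and "idempotent_add TYPE('m)"
    and "flow_graph X E1" and "flow_graph X E2"
    and "\<forall>x\<in>X. \<forall>y. fm_continuous (E1 x y) \<and> fm_distributive (E1 x y)"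
    and "\<forall>x\<in>X. \<forall>y. fm_continuous (E2 x y) \<and> fm_distributive (E2 x y)"
  shows "tf X E1 = tf X E2 \<longleftrightarrow>
           full_path_replacement X E1 E2 \<and> full_path_replacement X E2 E1"
proof -
  have G1: "good X E1" using assms(3,5) unfolding good_def flow_graph_def by blast
  have G2: "good X E2" using assms(4,6) unfolding good_def flow_graph_def by blast
  show ?thesis
  proof
    assume T: "tf X E1 = tf X E2"
    show "full_path_replacement X E1 E2 \<and> full_path_replacement X E2 E1"
      using tf_fpr[OF assms(1,2) G1 G2 T] tf_fpr[OF assms(1,2) G2 G1 T[symmetric]] by blast
  next
    assume R: "full_path_replacement X E1 E2 \<and> full_path_replacement X E2 E1"
    show "tf X E1 = tf X E2"
      unfolding tf_def
    proof (intro ext)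
      fix ifl y z
      show "outflow X E1 ifl y z = outflow X E2 ifl y z"
      proof (cases "y \<in> X \<and> z \<notin> X")
        case True
        then have "E1 y z (flow X E1 ifl y) = E2 y z (flow X E2 ifl y)"
          using fm_antisym[OF assms(1) fpr_le[OF assms(1,2) G1 G2 conjunct1[OF R]]
              fpr_le[OF assms(1,2) G2 G1 conjunct2[OF R]]] by blast
        then show ?thesis unfolding outflow_def using True by simp
      next
        case False
        then show ?thesis unfolding outflow_def by auto
      qed
    qed
  qed
qed

end
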